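(* Let $n \ge 3$ and let $x_1 < x_2 < \dots < x_n$ be real numbers. Then the maximum likelihood estimate $\hat\theta$ of the sample from the Cauchy distribution satisfies $$\left|\hat\theta - \frac{x_1+x_n}{2}\right| \le \frac{x_n - x_1}{2}.$$
   Context: $\mathbb{H} = \{\theta\in\mathbb{C}:\Im\theta>0\}$. The Cauchy distribution with parameter $\theta = \mu + i\sigma\in\mathbb{H}$ has density $f(x;\theta) = \frac{\sigma}{\pi}\frac{1}{(x-\mu)^2+\sigma^2}$; the maximum likelihood estimate is the (unique) maximizer over $\mathbb{H}$ of $\prod_{j=1}^n f(x_j;\theta)$. *)

theory Defs
  imports Complex_Main
begin

text \<open>Cauchy density with parameter theta = mu + i sigma in the upper half plane.\<close>
definition cauchy_density :: "real \<Rightarrow> complex \<Rightarrow> real" where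
  "cauchy_density x \<theta> = (Im \<theta> / pi) * (1 / ((x - Re \<theta>)^2 + (Im \<theta>)^2))"

definition cauchy_likelihood :: "nat \<Rightarrow> (nat \<Rightarrow> real) \<Rightarrow> complex \<Rightarrow> real" where
  "cauchy_likelihood n x \<theta> = (\<Prod>j=1..n. cauchy_density (x j) \<theta>)"

definition is_cauchy_mle :: "nat \<Rightarrow> (nat \<Rightarrow> real) \<Rightarrow> complex \<Rightarrow> bool" where
  "is_cauchy_mle n x \<theta> \<longleftrightarrow> Im \<theta> > 0 \<and>
     (\<forall>\<eta>. Im \<eta> > 0 \<longrightarrow> cauchy_likelihood n x \<eta> \<le> cauchy_likelihood n x \<theta>)"

end

theory Submission
  imports Defs
begin

lemma key_eq:
  fixes a b r t :: real
  assumes b: "b > 0" and r: "r > 0" and m: "m = a^2 + b^2"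
  shows "(r^2*b/m)/((t - r^2*a/m)^2 + (r^2*b/m)^2) = r^2*b/(t^2*m - 2*t*r^2*a + r^4)"
proof -
  have mp: "m > 0" using m b by (simp add: add_nonneg_pos)
  have D: "t^2*m - 2*t*r^2*a + r^4 > 0"
  proof -
    have eq: "t^2*m - 2*t*r^2*a + r^4 = (t*a - r^2)^2 + t^2*b^2" unfolding m by (simp add: algebra_simps power2_eq_square power4_eq_xxxx)
    have g: "0 \<le> (t*a - r^2)^2 + t^2*b^2" by simp
    have ne: "(t*a - r^2)^2 + t^2*b^2 \<noteq> 0"
    proof
      assume "(t*a - r^2)^2 + t^2*b^2 = 0"
      then have "t = 0" "t*a - r^2 = 0" using b by (auto simp: add_nonneg_eq_0_iff)
      then show False using r by simp
    qed
    show ?thesis by (metis order_less_le g ne eq)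
  qed
  have Q: "(t - r^2*a/m)^2 + (r^2*b/m)^2 = (t^2*m - 2*t*r^2*a + r^4) / m"
  proof -
    have "(t - r^2*a/m)^2 + (r^2*b/m)^2 = ((t*m - r^2*a)^2 + (r^2*b)^2) / m^2"
      using mp by (simp add: field_simps power2_eq_square)
    also have "(t*m - r^2*a)^2 + (r^2*b)^2 = (t^2*m - 2*t*r^2*a + r^4) * m"
      unfolding m by (simp add: algebra_simps power2_eq_square power4_eq_xxxx)
    finally show ?thesis using mp by (simp add: power2_eq_square)
  qed
  show ?thesis unfolding Q using mp D by simp
qed

lemma key_ineq:
  fixes a b r t :: real
  assumes b: "b > 0" and r: "r > 0" and m: "m = a^2 + b^2" and big: "m > r^2" and tr: "t^2 \<le> r^2"
  shows "b/((t-a)^2+b^2) \<le> (r^2*b/m)/((t - r^2*a/m)^2 + (r^2*b/m)^2)"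
    and "t^2 < r^2 \<Longrightarrow> b/((t-a)^2+b^2) < (r^2*b/m)/((t - r^2*a/m)^2 + (r^2*b/m)^2)"
proof -
  have D: "t^2*m - 2*t*r^2*a + r^4 > 0"
  proof -
    have "t^2*m - 2*t*r^2*a + r^4 = (t*a - r^2)^2 + t^2*b^2" unfolding m by (simp add: algebra_simps power2_eq_square power4_eq_xxxx)
    moreover have "(t*a - r^2)^2 + t^2*b^2 \<noteq> 0"
    proof
      assume "(t*a - r^2)^2 + t^2*b^2 = 0"
      then have "t = 0" "t*a - r^2 = 0" using b by (auto simp: add_nonneg_eq_0_iff)
      then show False using r by simp
    qed
    moreover have "0 \<le> (t*a - r^2)^2 + t^2*b^2" by simp
    ultimately show ?thesis by (metis order_less_le)
  qed
  have E: "(t-a)^2+b^2 > 0" using b by (simp add: add_nonneg_pos)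
  have id: "r^2*((t-a)^2+b^2) - (t^2*m - 2*t*r^2*a + r^4) = (r^2 - t^2)*(m - r^2)"
    unfolding m by (simp add: algebra_simps power2_eq_square power4_eq_xxxx)
  have eq: "(r^2*b/m)/((t - r^2*a/m)^2 + (r^2*b/m)^2) = r^2*b/(t^2*m - 2*t*r^2*a + r^4)"
    by (rule key_eq[OF b r m])
  have "(r^2 - t^2)*(m - r^2) \<ge> 0" using tr big by simp
  then have le: "t^2*m - 2*t*r^2*a + r^4 \<le> r^2*((t-a)^2+b^2)" using id by linarith
  show "b/((t-a)^2+b^2) \<le> (r^2*b/m)/((t - r^2*a/m)^2 + (r^2*b/m)^2)"
    unfolding eq using D E b le by (simp add: divide_simps)
  assume lt: "t^2 < r^2"
  have "(r^2 - t^2)*(m - r^2) > 0" using lt big by simp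
  then have le2: "t^2*m - 2*t*r^2*a + r^4 < r^2*((t-a)^2+b^2)" using id by linarith
  show "b/((t-a)^2+b^2) < (r^2*b/m)/((t - r^2*a/m)^2 + (r^2*b/m)^2)"
    unfolding eq using D E b le2 by (simp add: divide_simps)
qed

theorem mainTheorem10:
  fixes n :: nat and x :: "nat \<Rightarrow> real" and \<theta> :: complex
  assumes "n \<ge> 3"
    and "\<And>i j. 1 \<le> i \<Longrightarrow> i < j \<Longrightarrow> j \<le> n \<Longrightarrow> x i < x j"
    and "is_cauchy_mle n x \<theta>"
  shows "cmod (\<theta> - complex_of_real ((x 1 + x n) / 2)) \<le> (x n - x 1) / 2"
proof (rule ccontr)
  define c where "c = (x 1 + x n) / 2"
  define r where "r = (x n - x 1) / 2"
  define a where "a = Re \<theta> - c"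
  define b where "b = Im \<theta>"
  define m where "m = a^2 + b^2"
  define \<eta> where "\<eta> = Complex (c + r^2*a/m) (r^2*b/m)"
  assume "\<not> ?thesis"
  then have "r < cmod (\<theta> - complex_of_real c)" unfolding c_def r_def by simp
  also have "cmod (\<theta> - complex_of_real c) = sqrt m" unfolding cmod_def m_def a_def b_def by simp
  finally have rm: "r < sqrt m" .
  have b: "b > 0" using assms(3) unfolding is_cauchy_mle_def b_def by simp
  have x12: "x 1 < x 2" and x2n: "x 2 < x n" using assms(1) assms(2)[of 1 2] assms(2)[of 2 n] by auto
  have r: "r > 0" unfolding r_def using x12 x2n by simp
  have m0: "m \<ge> 0" unfolding m_def by simp
  have "r^2 < (sqrt m)^2" using rm r by (simp add: power_strict_mono)
  then have big: "m > r^2" using m0 by simp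
  have mp: "m > 0" using big r by (smt (verit) zero_less_power)
  have bnd: "(x j - c)^2 \<le> r^2" if j: "j \<in> {1..n}" for j
  proof -
    have "x 1 \<le> x j" using j assms(2)[of 1 j] by (cases "j = 1") auto
    moreover have "x j \<le> x n" using j assms(2)[of j n] by (cases "j = n") auto
    ultimately have "x j - c \<le> r" "c - x j \<le> r" unfolding c_def r_def by (simp_all add: field_simps)
    then have "\<bar>x j - c\<bar> \<le> \<bar>r\<bar>" using r by (simp add: abs_le_iff)
    then show ?thesis by (simp add: abs_le_square_iff)
  qed
  have bnd2: "(x 2 - c)^2 < r^2"
  proof -
    have "x 2 - c < r" "c - x 2 < r" unfolding c_def r_def using x12 x2n by (simp_all add: field_simps)
    then have "\<bar>x 2 - c\<bar> < \<bar>r\<bar>" using r by (simp add: abs_less_iff)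
    then show ?thesis by (meson abs_le_square_iff not_le)
  qed
  have in2: "2 \<in> {1..n}" using assms(1) by simp
  have dens: "cauchy_density y \<theta> = (b/((y - c - a)^2 + b^2)) / pi"
    "cauchy_density y \<eta> = ((r^2*b/m)/((y - c - r^2*a/m)^2 + (r^2*b/m)^2)) / pi" for y
    unfolding cauchy_density_def \<eta>_def a_def b_def by (simp_all add: algebra_simps)
  have pos: "cauchy_density (x j) \<theta> > 0" for j
    unfolding dens using b by (simp add: add_nonneg_pos)
  have le: "cauchy_density (x j) \<theta> \<le> cauchy_density (x j) \<eta>" if "j \<in> {1..n}" for j
    unfolding dens by (rule divide_right_mono[OF key_ineq(1)[OF b r m_def big bnd[OF that]]]) simp
  have lt: "cauchy_density (x 2) \<theta> < cauchy_density (x 2) \<eta>"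
    unfolding dens using in2 by (intro divide_strict_right_mono[OF key_ineq(2)[OF b r m_def big bnd[of 2] bnd2]]) simp_all
  have "cauchy_likelihood n x \<theta> = cauchy_density (x 2) \<theta> * (\<Prod>j\<in>{1..n}-{2}. cauchy_density (x j) \<theta>)"
    unfolding cauchy_likelihood_def using prod.remove[OF finite_atLeastAtMost in2] by simp
  also have "\<dots> < cauchy_density (x 2) \<eta> * (\<Prod>j\<in>{1..n}-{2}. cauchy_density (x j) \<eta>)"
  proof (rule mult_less_le_imp_less)
    show "(\<Prod>j\<in>{1..n}-{2}. cauchy_density (x j) \<theta>) \<le> (\<Prod>j\<in>{1..n}-{2}. cauchy_density (x j) \<eta>)"
      by (rule prod_mono) (use pos le less_imp_le in auto)
    show "0 < (\<Prod>j\<in>{1..n}-{2}. cauchy_density (x j) \<theta>)" by (rule prod_pos) (use pos in auto)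
  qed (use lt pos less_imp_le in auto)
  also have "\<dots> = cauchy_likelihood n x \<eta>"
    unfolding cauchy_likelihood_def using prod.remove[OF finite_atLeastAtMost in2] by (simp only: eq_commute)
  finally have "cauchy_likelihood n x \<theta> < cauchy_likelihood n x \<eta>" .
  moreover have "Im \<eta> > 0" unfolding \<eta>_def using b r mp by simp
  ultimately show False using assms(3) unfolding is_cauchy_mle_def by force
qed

end
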